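(* Assume (T1)–(T5). Let $\mu_0^*\in\mathbb P(S)$ be arbitrary and define recursively $$\mu^*_{k+1}(B):=\int_S\int_A\mathbb P\big(T(x,a,\mu^*_k,Z)\in B\big)\,\bar Q^*(da|x)\,\mu^*_k(dx),\quad B\subset S\text{ Borel}.$$ Then $W(\mu^*_{k+1},\mu^* )\le\gamma\,W(\mu^*_k,\mu^* )$ for all $k\ge0$, and consequently $\mu_k^*\Rightarrow\mu^*$ weakly as $k\to\infty$.
   Context: $S\subset\mathbb R^k$ and $A\subset\mathbb R^m$ are compact, with Euclidean norms $|\cdot|$; every action in $A$ is admissible in every state ($D(x)=A$ for all $x$). $Z$ is a random variable with law $\mathbb P^Z$ on a Borel set $\mathcal Z$ and $T:S\times A\times\mathbb P(S)\times\mathcal Z\to S$ is measurable (no common noise). $W$ denotes the Wasserstein distance $W(\mu,\nu):=\sup\{|\int f\,d\nu-\int f\,d\mu|: |f(x)-f(y)|\le|x-y|\ \forall x,y\}$ (on $\mathbb P(S)$ or $\mathbb P(A)$). $\mu^*\in\mathbb P(S)$ and $\bar Q^*$ is a stochastic kernel from $S$ to $A$ such that $\mu^*$ is a stationary distribution of the kernel $P^{\bar Q^*}(B|x):=\int_A\mathbb P(T(x,a,\mu^*,Z)\in B)\bar Q^*(da|x)$, i.e. $\mu^*(B)=\int_S P^{\bar Q^*}(B|x)\mu^*(dx)$. (T1) There is $\gamma_W>0$ with $\sup_{x,a,z}|T(x,a,\mu,z)-T(x,a,\mu^*,z)|\le\gamma_W W(\mu,\mu^* )$ for all $\mu\in\mathbb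 P(S)$. (T2) $W(\bar Q^*(\cdot|x),\bar Q^*(\cdot|x'))\le\gamma_Q|x-x'|$ for all $x,x'\in S$. (T3) There is $\gamma_A>0$ with $\sup_{x,z}|T(x,a,\mu^*,z)-T(x,a',\mu^*,z)|\le\gamma_A|a-a'|$ for all $a,a'\in A$. (T4) There is $\gamma_S>0$ with $\sup_{a,z}|T(x,a,\mu^*,z)-T(x',a,\mu^*,z)|\le\gamma_S|x-x'|$ for all $x,x'\in S$. (T5) $\gamma:=\gamma_W+\gamma_Q\gamma_A+\gamma_S<1$. *)

theory Defs
  imports "HOL-Probability.Probability"
begin

text \<open>Probability measures on the Borel sets of the ambient space that are
concentrated on the set S (i.e. elements of P(S)).\<close>
definition prob_on :: "'a::topological_space set \<Rightarrow> 'a measure \<Rightarrow> bool" where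
  "prob_on S M \<longleftrightarrow> prob_space M \<and> sets M = sets borel \<and> emeasure M S = 1"

definition lip1 :: "('a::metric_space \<Rightarrow> real) set" where
  "lip1 = {f. \<forall>x y. \<bar>f x - f y\<bar> \<le> dist x y}"

definition wdist :: "'a::metric_space measure \<Rightarrow> 'a measure \<Rightarrow> real" where
  "wdist M N = (SUP f \<in> lip1. \<bar>(\<integral>x. f x \<partial>N) - (\<integral>x. f x \<partial>M)\<bar>)"

definition weak_conv_to :: "(nat \<Rightarrow> 'a::topological_space measure) \<Rightarrow> 'a measure \<Rightarrow> bool" where
  "weak_conv_to Ms M \<longleftrightarrow>
     (\<forall>f::'a \<Rightarrow> real. continuous_on UNIV f \<and> bounded (range f) \<longrightarrow>
        (\<lambda>k. \<integral>x. f x \<partial>Ms k) \<longlonglongrightarrow> (\<integral>x. f x \<partial>M))"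

end

theory Submission
  imports Defs
begin



lemma lip_borel:
  fixes g :: "'x::metric_space \<Rightarrow> real"
  assumes "L \<ge> 0" "\<And>x y. \<bar>g x - g y\<bar> \<le> L * dist x y"
  shows "g \<in> borel_measurable borel" "continuous_on UNIV g"
proof -
  have "L-lipschitz_on UNIV g" using assms by (auto intro!: lipschitz_onI simp: dist_real_def)
  then show c: "continuous_on UNIV g" by (rule lipschitz_on_continuous_on)
  then show "g \<in> borel_measurable borel" by (rule borel_measurable_continuous_onI)
qed

lemma lip1_borel: "f \<in> lip1 \<Longrightarrow> f \<in> borel_measurable borel"
  by (rule lip_borel(1)[of 1]) (auto simp: lip1_def)

lemma prob_onD:
  fixes S :: "'x::metric_space set"
  assumes "prob_on S M" "compact S"
  shows "prob_space M" "sets M = sets borel" "S \<in> sets M" "AE x in M. x \<in> S" "S \<noteq> {}"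
    "space M = UNIV"
proof -
  show p: "prob_space M" and s: "sets M = sets borel" using assms by (auto simp: prob_on_def)
  show SM: "S \<in> sets M" using s assms(2) by (auto intro: borel_closed compact_imp_closed)
  interpret prob_space M by fact
  show "AE x in M. x \<in> S" using AE_in_set_eq_1[OF SM] assms(1)
    by (simp add: prob_on_def emeasure_eq_measure)
  show "S \<noteq> {}" using assms(1) by (auto simp: prob_on_def)
  show "space M = UNIV" using sets_eq_imp_space_eq[OF s] by simp
qed

lemma abs_int_bound:
  fixes g :: "_ \<Rightarrow> real"
  assumes "prob_space M" "g \<in> borel_measurable M" "AE x in M. \<bar>g x\<bar> \<le> C"
  shows "\<bar>integral\<^sup>L M g\<bar> \<le> C" "integrable M g"
proof -
  interpret prob_space M by fact
  show i: "integrable M g" using assms by (intro integrable_const_bound[where B=C]) auto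
  have "\<bar>integral\<^sup>L M g\<bar> \<le> integral\<^sup>L M (\<lambda>x. \<bar>g x\<bar>)"
    using integral_norm_bound[of M g] by simp
  also have "\<dots> \<le> integral\<^sup>L M (\<lambda>x. C)"
    using assms i by (intro integral_mono_AE) auto
  finally show "\<bar>integral\<^sup>L M g\<bar> \<le> C" by (simp add: prob_space)
qed

lemma W_bdd:
  fixes S :: "'x::metric_space set"
  assumes "compact S" "prob_on S M" "prob_on S N"
  shows "bdd_above ((\<lambda>f. \<bar>(\<integral>x. f x \<partial>N) - (\<integral>x. f x \<partial>M)\<bar>) ` lip1)"
    and "\<And>f. f \<in> lip1 \<Longrightarrow> \<bar>(\<integral>x. f x \<partial>N) - (\<integral>x. f x \<partial>M)\<bar> \<le> wdist M N"
proof -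
  obtain x0 where x0: "x0 \<in> S" using prob_onD(5)[OF assms(2,1)] by auto
  obtain c where c: "\<And>y. y \<in> S \<Longrightarrow> dist x0 y \<le> c"
    using compact_imp_bounded[OF assms(1)] unfolding bounded_any_center[of S x0] by blast
  have key: "\<bar>(\<integral>x. f x \<partial>P) - f x0\<bar> \<le> c" if f: "f \<in> lip1" and P: "prob_on S P" for f P
  proof -
    interpret prob_space P using prob_onD[OF P assms(1)] by simp
    have fb: "f \<in> borel_measurable P"
      by (subst measurable_cong_sets[OF prob_onD(2)[OF P assms(1)] refl]) (rule lip1_borel[OF f])
    have AE: "AE x in P. \<bar>f x - f x0\<bar> \<le> c"
      using prob_onD(4)[OF P assms(1)]
    proof eventually_elim
      case (elim x)
      have "\<bar>f x - f x0\<bar> \<le> dist x x0" using f unfolding lip1_def mem_Collect_eq by blast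
      also have "\<dots> \<le> c" using c[OF elim] by (simp add: dist_commute)
      finally show ?case .
    qed
    have fb2: "(\<lambda>x. f x - f x0) \<in> borel_measurable P" using fb by (rule borel_measurable_diff) simp
    note ab = abs_int_bound[OF prob_space_axioms fb2 AE]
    have "integrable P f"
      using Bochner_Integration.integrable_add[OF ab(2) integrable_const[of "f x0"]] by simp
    then have "integral\<^sup>L P (\<lambda>x. f x - f x0) = integral\<^sup>L P f - f x0"
      by (subst Bochner_Integration.integral_diff) (auto simp: prob_space)
    then show ?thesis using ab(1) by simp
  qed
  show b: "bdd_above ((\<lambda>f. \<bar>(\<integral>x. f x \<partial>N) - (\<integral>x. f x \<partial>M)\<bar>) ` lip1)"
  proof (rule bdd_aboveI2[where M="2*c"])
    fix f :: "'x \<Rightarrow> real" assume "f \<in> lip1"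
    from key[OF this assms(2)] key[OF this assms(3)]
    show "\<bar>(\<integral>x. f x \<partial>N) - (\<integral>x. f x \<partial>M)\<bar> \<le> 2 * c" by linarith
  qed
  fix f :: "'x \<Rightarrow> real" assume "f \<in> lip1"
  then show "\<bar>(\<integral>x. f x \<partial>N) - (\<integral>x. f x \<partial>M)\<bar> \<le> wdist M N"
    unfolding wdist_def by (rule cSUP_upper[OF _ b])
qed

lemma zero_lip1: "(\<lambda>x. 0) \<in> lip1" by (simp add: lip1_def)

lemma wdist_nonneg:
  assumes "compact S" "prob_on S M" "prob_on S N"
  shows "wdist M N \<ge> 0"
  using W_bdd(2)[OF assms zero_lip1] by simp

definition infconv :: "('x::metric_space \<Rightarrow> real) \<Rightarrow> real \<Rightarrow> 'x set \<Rightarrow> 'x \<Rightarrow> real" where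
  "infconv h L K x = Inf ((\<lambda>y. h y + L * dist x y) ` K)"

lemma infconv_lip:
  assumes K: "K \<noteq> {}" and L: "L \<ge> 0" and bdd: "\<And>x. bdd_below ((\<lambda>y. h y + L * dist x y) ` K)"
  shows "\<bar>infconv h L K x - infconv h L K x'\<bar> \<le> L * dist x x'"
proof -
  have *: "infconv h L K x - L * dist x x' \<le> infconv h L K x'" for x x'
    unfolding infconv_def
  proof (rule cInf_greatest)
    show "(\<lambda>y. h y + L * dist x' y) ` K \<noteq> {}" using K by simp
    fix v assume "v \<in> (\<lambda>y. h y + L * dist x' y) ` K"
    then obtain y where y: "y \<in> K" "v = h y + L * dist x' y" by auto
    have "Inf ((\<lambda>y. h y + L * dist x y) ` K) \<le> h y + L * dist x y"
      using y bdd by (intro cInf_lower) auto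
    also have "\<dots> \<le> h y + L * dist x' y + L * dist x x'"
    proof -
      have "dist x y \<le> dist x x' + dist x' y" by (rule dist_triangle)
      then have "L * dist x y \<le> L * (dist x x' + dist x' y)" using L by (rule mult_left_mono)
      then show ?thesis by (simp add: distrib_left)
    qed
    finally show "Inf ((\<lambda>y. h y + L * dist x y) ` K) - L * dist x x' \<le> v" using y by simp
  qed
  from *[of x x'] *[of x' x] show ?thesis by (simp add: dist_commute)
qed

lemma infconv_le:
  assumes "x \<in> K" "bdd_below ((\<lambda>y. h y + L * dist x y) ` K)"
  shows "infconv h L K x \<le> h x"
  unfolding infconv_def using cInf_lower[OF imageI[OF assms(1)] assms(2)] by simp

lemma infconv_ge:
  assumes "K \<noteq> {}" "\<And>y. y \<in> K \<Longrightarrow> c \<le> h y + L * dist x y"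
  shows "c \<le> infconv h L K x"
  unfolding infconv_def using assms by (intro cInf_greatest) auto

lemma lipS_bound:
  fixes S :: "'x::metric_space set" and g :: "'x \<Rightarrow> real"
  assumes S: "compact S" and M: "prob_on S M" and N: "prob_on S N" and L: "L > 0"
    and gm: "g \<in> borel_measurable borel"
    and gl: "\<And>x y. x \<in> S \<Longrightarrow> y \<in> S \<Longrightarrow> \<bar>g x - g y\<bar> \<le> L * dist x y"
  shows "\<bar>(\<integral>x. g x \<partial>N) - (\<integral>x. g x \<partial>M)\<bar> \<le> L * wdist M N"
proof -
  obtain y0 where y0: "y0 \<in> S" using prob_onD(5)[OF M S] by auto
  define G where "G = infconv g L S"
  have bdd: "bdd_below ((\<lambda>y. g y + L * dist x y) ` S)" for x
  proof (rule bdd_belowI2[where m="g y0 - L * dist x y0"])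
    fix y assume y: "y \<in> S"
    have "g y0 - g y \<le> L * dist y y0" using gl[OF y y0] by simp
    moreover have "dist y y0 \<le> dist y x + dist x y0" by (rule dist_triangle)
    then have "L * dist y y0 \<le> L * dist x y + L * dist x y0" using L
      by (metis dist_commute distrib_left less_eq_real_def mult_left_mono)
    ultimately show "g y0 - L * dist x y0 \<le> g y + L * dist x y" by linarith
  qed
  have Gl: "\<bar>G x - G x'\<bar> \<le> L * dist x x'" for x x'
    unfolding G_def using infconv_lip[OF _ _ bdd] y0 L by auto
  have GS: "G x = g x" if x: "x \<in> S" for x
  proof (rule antisym)
    show "G x \<le> g x" unfolding G_def by (rule infconv_le[OF x bdd])
    show "g x \<le> G x" unfolding G_def
    proof (rule infconv_ge)
      show "S \<noteq> {}" using y0 by auto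
      fix y assume y: "y \<in> S"
      show "g x \<le> g y + L * dist x y" using gl[OF x y] by (auto simp: abs_le_iff)
    qed
  qed
  have Gm: "G \<in> borel_measurable borel" using lip_borel(1)[OF _ Gl] L by simp
  have lip: "(\<lambda>x. G x / L) \<in> lip1" unfolding lip1_def using Gl L
    by (auto simp: diff_divide_distrib[symmetric] abs_divide pos_divide_le_eq mult.commute)
  have eq: "integral\<^sup>L P g = integral\<^sup>L P G" if P: "prob_on S P" for P
  proof (rule integral_cong_AE)
    show "g \<in> borel_measurable P" "G \<in> borel_measurable P"
      using gm Gm measurable_cong_sets[OF prob_onD(2)[OF P S] refl] by auto
    show "AE x in P. g x = G x" using prob_onD(4)[OF P S] by eventually_elim (simp add: GS)
  qed
  have "\<bar>(\<integral>x. G x / L \<partial>N) - (\<integral>x. G x / L \<partial>M)\<bar> \<le> wdist M N"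
    by (rule W_bdd(2)[OF S M N lip])
  then have "\<bar>(\<integral>x. G x \<partial>N) - (\<integral>x. G x \<partial>M)\<bar> / L \<le> wdist M N"
    using L by (simp add: diff_divide_distrib[symmetric] abs_divide)
  then show ?thesis using eq[OF M] eq[OF N] L by (simp add: divide_le_eq mult.commute)
qed

lemma wdist_single:
  fixes S :: "'x::metric_space set"
  assumes S: "compact S" and M: "prob_on S M" and N: "prob_on S N" and sub: "S \<subseteq> {x0}"
  shows "wdist M N = 0"
proof -
  have "integral\<^sup>L P f = f x0" if P: "prob_on S P" and f: "f \<in> lip1" for P f
  proof -
    interpret prob_space P using prob_onD[OF P S] by simp
    have "integral\<^sup>L P f = integral\<^sup>L P (\<lambda>x. f x0)"
    proof (rule integral_cong_AE)
      show "f \<in> borel_measurable P"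
        using lip1_borel[OF f] measurable_cong_sets[OF prob_onD(2)[OF P S] refl] by auto
      show "(\<lambda>x. f x0) \<in> borel_measurable P" by simp
      show "AE x in P. f x = f x0" using prob_onD(4)[OF P S] by eventually_elim (use sub in auto)
    qed
    then show ?thesis by (simp add: prob_space)
  qed
  then have z: "\<And>f. f \<in> lip1 \<Longrightarrow> \<bar>(\<integral>x. f x \<partial>N) - (\<integral>x. f x \<partial>M)\<bar> = 0"
    using M N by simp
  have "wdist M N = (SUP f\<in>(lip1::('x \<Rightarrow> real) set). (0::real))" unfolding wdist_def
    using z by (intro SUP_cong) auto
  also have "\<dots> = 0" by (rule cSUP_const) (use zero_lip1[where 'a='x] in blast)
  finally show ?thesis .
qed

lemma clip:
  fixes S :: "'x::metric_space set"
  assumes S: "compact S" and x0: "x0 \<in> S" and c: "\<And>y. y \<in> S \<Longrightarrow> dist x0 y \<le> c"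
    and f: "f \<in> lip1"
  shows "(\<lambda>y. max (-c) (min c (f y - f x0))) \<in> lip1"
    and "\<And>y. \<bar>max (-c) (min c (f y - f x0))\<bar> \<le> c"
    and "\<And>P. prob_on S P \<Longrightarrow> integral\<^sup>L P f = (\<integral>y. max (-c) (min c (f y - f x0)) \<partial>P) + f x0"
proof -
  have c0: "c \<ge> 0" using c[OF x0] by simp
  have fl: "\<bar>f x - f y\<bar> \<le> dist x y" for x y using f unfolding lip1_def by auto
  show "(\<lambda>y. max (-c) (min c (f y - f x0))) \<in> lip1" unfolding lip1_def
  proof (safe)
    fix x y
    have "\<bar>max (-c) (min c (f x - f x0)) - max (-c) (min c (f y - f x0))\<bar> \<le> \<bar>f x - f y\<bar>"
      by (simp add: max_def min_def abs_le_iff) linarith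
    then show "\<bar>max (-c) (min c (f x - f x0)) - max (-c) (min c (f y - f x0))\<bar> \<le> dist x y"
      using fl[of x y] by linarith
  qed
  show "\<And>y. \<bar>max (-c) (min c (f y - f x0))\<bar> \<le> c" using c0 by (auto simp: abs_le_iff)
  fix P assume P: "prob_on S P"
  interpret prob_space P using prob_onD[OF P S] by simp
  have fb: "f \<in> borel_measurable P"
    by (subst measurable_cong_sets[OF prob_onD(2)[OF P S] refl]) (rule lip1_borel[OF f])
  have fb2: "(\<lambda>x. f x - f x0) \<in> borel_measurable P" using fb by (rule borel_measurable_diff) simp
  have AE: "AE x in P. \<bar>f x - f x0\<bar> \<le> c"
    using prob_onD(4)[OF P S]
  proof eventually_elim
    case (elim x)
    have "\<bar>f x - f x0\<bar> \<le> dist x x0" by (rule fl)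
    also have "\<dots> \<le> c" using c[OF elim] by (simp add: dist_commute)
    finally show ?case .
  qed
  note ab = abs_int_bound[OF prob_space_axioms fb2 AE]
  have "integrable P f"
    using Bochner_Integration.integrable_add[OF ab(2) integrable_const[of "f x0"]] by simp
  then have "integral\<^sup>L P (\<lambda>x. f x - f x0) = integral\<^sup>L P f - f x0"
    by (subst Bochner_Integration.integral_diff) (auto simp: prob_space)
  moreover have "integral\<^sup>L P (\<lambda>x. f x - f x0) = (\<integral>y. max (-c) (min c (f y - f x0)) \<partial>P)"
  proof (rule integral_cong_AE)
    show "(\<lambda>x. f x - f x0) \<in> borel_measurable P" by (rule fb2)
    show "(\<lambda>y. max (-c) (min c (f y - f x0))) \<in> borel_measurable P" using fb2 by measurable
    show "AE x in P. f x - f x0 = max (- c) (min c (f x - f x0))"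
      using AE by eventually_elim (auto simp: abs_le_iff)
  qed
  ultimately show "integral\<^sup>L P f = (\<integral>y. max (-c) (min c (f y - f x0)) \<partial>P) + f x0" by simp
qed

lemma weak_from_W:
  fixes S :: "'x::metric_space set" and \<mu> :: "nat \<Rightarrow> 'x measure"
  assumes S: "compact S" and \<mu>: "\<And>k. prob_on S (\<mu> k)" and mus: "prob_on S \<mu>s"
    and W: "(\<lambda>k. wdist (\<mu> k) \<mu>s) \<longlonglongrightarrow> 0"
  shows "weak_conv_to \<mu> \<mu>s"
  unfolding weak_conv_to_def
proof (intro allI impI, elim conjE)
  fix f :: "'x \<Rightarrow> real"
  assume fc: "continuous_on UNIV f" and fbd: "bounded (range f)"
  obtain B where B: "\<And>x. \<bar>f x\<bar> \<le> B" using fbd unfolding bounded_iff by auto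
  have fm: "f \<in> borel_measurable borel" by (rule borel_measurable_continuous_onI[OF fc])
  obtain y0 where y0: "y0 \<in> S" using prob_onD(5)[OF mus S] by auto
  show "(\<lambda>k. \<integral>x. f x \<partial>\<mu> k) \<longlonglongrightarrow> (\<integral>x. f x \<partial>\<mu>s)"
  proof (rule LIMSEQ_I)
    fix r :: real assume r: "0 < r"
    define e where "e = r / 4"
    have e: "e > 0" using r by (simp add: e_def)
    have "uniformly_continuous_on S f"
      by (rule compact_uniformly_continuous[OF continuous_on_subset[OF fc] S]) simp
    then obtain \<delta> where \<delta>: "\<delta> > 0" and ud: "\<And>x y. x \<in> S \<Longrightarrow> y \<in> S \<Longrightarrow> dist y x < \<delta> \<Longrightarrow> dist (f y) (f x) < e"
      unfolding uniformly_continuous_on_def using e by metis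
    have B0: "B \<ge> 0" using B[of y0] by simp
    define n where "n = 2 * B / \<delta> + 1"
    have n0: "n > 0" unfolding n_def using B0 \<delta> by (simp add: add_nonneg_pos)
    have n\<delta>: "n * \<delta> \<ge> 2 * B" unfolding n_def using \<delta> B0 by (simp add: distrib_right)
    define g where "g = infconv f n S"
    have bdd: "bdd_below ((\<lambda>y. f y + n * dist x y) ` S)" for x
    proof (rule bdd_belowI2[where m="-B"])
      fix y show "- B \<le> f y + n * dist x y" using B[of y] n0 by (smt (verit) abs_le_iff mult_nonneg_nonneg zero_le_dist)
    qed
    have gl: "\<bar>g x - g x'\<bar> \<le> n * dist x x'" for x x'
      unfolding g_def using infconv_lip[OF _ _ bdd] y0 n0 by auto
    have gm: "g \<in> borel_measurable borel" using lip_borel(1)[OF _ gl] n0 by simp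
    have gle: "g x \<le> f x" if "x \<in> S" for x unfolding g_def by (rule infconv_le[OF that bdd])
    have gge: "f x - e \<le> g x" if x: "x \<in> S" for x unfolding g_def
    proof (rule infconv_ge)
      show "S \<noteq> {}" using y0 by auto
      fix y assume y: "y \<in> S"
      show "f x - e \<le> f y + n * dist x y"
      proof (cases "dist y x < \<delta>")
        case True
        then have "dist (f y) (f x) < e" by (rule ud[OF x y])
        then show ?thesis using n0 by (simp add: dist_real_def abs_less_iff) (smt (verit) mult_nonneg_nonneg zero_le_dist)
      next
        case False
        then have "n * \<delta> \<le> n * dist x y" using n0 by (simp add: dist_commute)
        then show ?thesis using n\<delta> B[of x] B[of y] e by (simp add: abs_le_iff)
      qed
    qed
    have close: "\<bar>(\<integral>x. f x \<partial>P) - (\<integral>x. g x \<partial>P)\<bar> \<le> e" if P: "prob_on S P" for P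
    proof -
      note pp = prob_onD[OF P S]
      have fmP: "f \<in> borel_measurable P" and gmP: "g \<in> borel_measurable P"
        using fm gm measurable_cong_sets[OF pp(2) refl] by auto
      have fi: "integrable P f" using abs_int_bound(2)[OF pp(1) fmP, of B] B by simp
      have "AE x in P. \<bar>g x\<bar> \<le> B + e"
        using pp(4)
      proof eventually_elim
        case (elim x)
        show ?case using gle[OF elim] gge[OF elim] B[of x] e by (simp add: abs_le_iff)
      qed
      then have gi: "integrable P g" using abs_int_bound(2)[OF pp(1) gmP] by blast
      have "(\<integral>x. f x \<partial>P) - (\<integral>x. g x \<partial>P) = (\<integral>x. f x - g x \<partial>P)"
        using fi gi by (simp add: Bochner_Integration.integral_diff)
      moreover have "\<bar>\<integral>x. f x - g x \<partial>P\<bar> \<le> e"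
      proof (rule abs_int_bound(1)[OF pp(1)])
        show "(\<lambda>x. f x - g x) \<in> borel_measurable P" using fmP gmP by (rule borel_measurable_diff)
        show "AE x in P. \<bar>f x - g x\<bar> \<le> e" using pp(4)
        proof eventually_elim
          case (elim x)
          show ?case using gle[OF elim] gge[OF elim] by (simp add: abs_le_iff)
        qed
      qed
      ultimately show ?thesis by simp
    qed
    have "eventually (\<lambda>k. wdist (\<mu> k) \<mu>s < e / n) sequentially"
      using W e n0 by (intro order_tendstoD(2)) auto
    then obtain N where N: "\<And>k. k \<ge> N \<Longrightarrow> wdist (\<mu> k) \<mu>s < e / n"
      unfolding eventually_sequentially by blast
    show "\<exists>no. \<forall>k\<ge>no. norm ((\<integral>x. f x \<partial>\<mu> k) - (\<integral>x. f x \<partial>\<mu>s)) < r"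
    proof (intro exI allI impI)
      fix k assume k: "N \<le> k"
      have m: "\<bar>(\<integral>x. g x \<partial>\<mu>s) - (\<integral>x. g x \<partial>\<mu> k)\<bar> \<le> n * wdist (\<mu> k) \<mu>s"
        by (rule lipS_bound[OF S \<mu> mus n0 gm]) (use gl in auto)
      have "n * wdist (\<mu> k) \<mu>s < e" using N[OF k] n0 by (simp add: pos_less_divide_eq mult.commute)
      moreover have "r = 4 * e" by (simp add: e_def)
      moreover note c1 = close[OF \<mu>[of k]] close[OF mus]
      ultimately show "norm ((\<integral>x. f x \<partial>\<mu> k) - (\<integral>x. f x \<partial>\<mu>s)) < r"
        using m unfolding abs_le_iff abs_less_iff real_norm_def by linarith
    qed
  qed
qed



locale setting =
  fixes S :: "'s::euclidean_space set"
    and A :: "'a::euclidean_space set"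
    and PZ :: "'z measure"
    and T :: "'s \<Rightarrow> 'a \<Rightarrow> 's measure \<Rightarrow> 'z \<Rightarrow> 's"
    and Q :: "'s \<Rightarrow> 'a measure"
    and \<mu>s :: "'s measure"
    and \<gamma>W \<gamma>Q \<gamma>A \<gamma>S :: real
  assumes S_compact: "compact S"
    and A_compact: "compact A"
    and PZ: "prob_space PZ"
    and T_meas: "\<And>\<nu>. prob_on S \<nu> \<Longrightarrow>
        (\<lambda>(x, a, z). T x a \<nu> z) \<in> borel_measurable (borel \<Otimes>\<^sub>M (borel \<Otimes>\<^sub>M PZ))"
    and T_range: "\<And>\<nu> x a z. prob_on S \<nu> \<Longrightarrow> x \<in> S \<Longrightarrow> a \<in> A \<Longrightarrow> z \<in> space PZ \<Longrightarrow>
        T x a \<nu> z \<in> S"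
    and Q_prob: "\<And>x. prob_space (Q x) \<and> sets (Q x) = sets borel"
    and Q_A: "\<And>x. x \<in> S \<Longrightarrow> emeasure (Q x) A = 1"
    and Q_meas: "\<And>B. B \<in> sets borel \<Longrightarrow> (\<lambda>x. emeasure (Q x) B) \<in> borel_measurable borel"
    and mus: "prob_on S \<mu>s"
    and stationary: "\<And>B. B \<in> sets borel \<Longrightarrow>
        emeasure \<mu>s B = (\<integral>\<^sup>+ x. (\<integral>\<^sup>+ a. emeasure PZ {z \<in> space PZ. T x a \<mu>s z \<in> B} \<partial>Q x) \<partial>\<mu>s)"
    and T1: "\<gamma>W > 0" "\<And>\<nu> x a z. prob_on S \<nu> \<Longrightarrow> x \<in> S \<Longrightarrow> a \<in> A \<Longrightarrow> z \<in> space PZ \<Longrightarrow>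
        dist (T x a \<nu> z) (T x a \<mu>s z) \<le> \<gamma>W * wdist \<nu> \<mu>s"
    and T2: "\<And>x x'. x \<in> S \<Longrightarrow> x' \<in> S \<Longrightarrow> wdist (Q x) (Q x') \<le> \<gamma>Q * dist x x'"
    and T3: "\<gamma>A > 0" "\<And>x a a' z. x \<in> S \<Longrightarrow> a \<in> A \<Longrightarrow> a' \<in> A \<Longrightarrow> z \<in> space PZ \<Longrightarrow>
        dist (T x a \<mu>s z) (T x a' \<mu>s z) \<le> \<gamma>A * dist a a'"
    and T4: "\<gamma>S > 0" "\<And>x x' a z. x \<in> S \<Longrightarrow> x' \<in> S \<Longrightarrow> a \<in> A \<Longrightarrow> z \<in> space PZ \<Longrightarrow>
        dist (T x a \<mu>s z) (T x' a \<mu>s z) \<le> \<gamma>S * dist x x'"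
begin

definition KT :: "'s measure \<Rightarrow> 's \<Rightarrow> 's measure" where
  "KT \<nu> x = Q x \<bind> (\<lambda>a. distr PZ borel (\<lambda>z. T x a \<nu> z))"

lemma Q_kernel: "Q \<in> borel \<rightarrow>\<^sub>M subprob_algebra borel"
  by (rule measurable_subprob_algebra) (auto simp: Q_prob prob_space_imp_subprob_space Q_meas)

lemma Q_probon: "x \<in> S \<Longrightarrow> prob_on A (Q x)"
  using Q_prob Q_A by (simp add: prob_on_def)

lemma T_sec: "prob_on S \<nu> \<Longrightarrow> (\<lambda>z. T x a \<nu> z) \<in> PZ \<rightarrow>\<^sub>M borel"
proof -
  assume \<nu>: "prob_on S \<nu>"
  have "(\<lambda>z. (x, a, z)) \<in> PZ \<rightarrow>\<^sub>M borel \<Otimes>\<^sub>M (borel \<Otimes>\<^sub>M PZ)" by measurable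
  from measurable_compose[OF this T_meas[OF \<nu>]] show ?thesis by simp
qed

lemma D_meas: "prob_on S \<nu> \<Longrightarrow>
  (\<lambda>p. distr PZ borel (\<lambda>z. T (fst p) (snd p) \<nu> z)) \<in> (borel \<Otimes>\<^sub>M borel) \<rightarrow>\<^sub>M subprob_algebra borel"
proof -
  assume \<nu>: "prob_on S \<nu>"
  have r: "(\<lambda>w. (fst (fst w), snd (fst w), snd w)) \<in> (borel \<Otimes>\<^sub>M borel) \<Otimes>\<^sub>M PZ \<rightarrow>\<^sub>M borel \<Otimes>\<^sub>M (borel \<Otimes>\<^sub>M PZ)"
    by measurable
  have "(\<lambda>w. T (fst (fst w)) (snd (fst w)) \<nu> (snd w)) \<in> (borel \<Otimes>\<^sub>M borel) \<Otimes>\<^sub>M PZ \<rightarrow>\<^sub>M borel"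
    using measurable_compose[OF r T_meas[OF \<nu>]] by simp
  then have f: "case_prod (\<lambda>p z. T (fst p) (snd p) \<nu> z) \<in> (borel \<Otimes>\<^sub>M borel) \<Otimes>\<^sub>M PZ \<rightarrow>\<^sub>M borel"
    by (simp add: case_prod_beta')
  have g: "(\<lambda>_. PZ) \<in> (borel \<Otimes>\<^sub>M borel) \<rightarrow>\<^sub>M subprob_algebra PZ"
    by (rule measurable_const) (simp add: space_subprob_algebra PZ prob_space_imp_subprob_space)
  show ?thesis using measurable_distr2[OF f g] .
qed

lemma D_sec: "prob_on S \<nu> \<Longrightarrow>
  (\<lambda>a. distr PZ borel (\<lambda>z. T x a \<nu> z)) \<in> M \<rightarrow>\<^sub>M subprob_algebra borel"
  if "sets M = sets borel"
proof -
  assume \<nu>: "prob_on S \<nu>"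
  have "(\<lambda>a. (x, a)) \<in> borel \<rightarrow>\<^sub>M borel \<Otimes>\<^sub>M borel" by measurable
  from measurable_compose[OF this D_meas[OF \<nu>]]
  show ?thesis by (subst measurable_cong_sets[OF that refl]) simp
qed

lemma KT_meas: "prob_on S \<nu> \<Longrightarrow> KT \<nu> \<in> M \<rightarrow>\<^sub>M subprob_algebra borel" if "sets M = sets borel"
proof -
  assume \<nu>: "prob_on S \<nu>"
  have "(\<lambda>x. Q x \<bind> (\<lambda>a. distr PZ borel (\<lambda>z. T x a \<nu> z))) \<in> borel \<rightarrow>\<^sub>M subprob_algebra borel"
    by (rule measurable_bind[OF Q_kernel]) (use D_meas[OF \<nu>] in simp)
  then show ?thesis unfolding KT_def[abs_def] by (subst measurable_cong_sets[OF that refl]) simp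
qed

lemma KT_emeasure:
  assumes \<nu>: "prob_on S \<nu>" and B: "B \<in> sets borel"
  shows "emeasure (\<nu> \<bind> KT \<nu>) B =
    (\<integral>\<^sup>+ x. (\<integral>\<^sup>+ a. emeasure PZ {z \<in> space PZ. T x a \<nu> z \<in> B} \<partial>Q x) \<partial>\<nu>)"
proof -
  note pn = prob_onD[OF \<nu> S_compact]
  have "emeasure (\<nu> \<bind> KT \<nu>) B = (\<integral>\<^sup>+ x. emeasure (KT \<nu> x) B \<partial>\<nu>)"
    by (rule emeasure_bind[OF _ KT_meas[OF pn(2) \<nu>] B]) (simp add: pn)
  also have "\<dots> = (\<integral>\<^sup>+ x. (\<integral>\<^sup>+ a. emeasure PZ {z \<in> space PZ. T x a \<nu> z \<in> B} \<partial>Q x) \<partial>\<nu>)"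
  proof (rule nn_integral_cong)
    fix x
    interpret Qx: prob_space "Q x" using Q_prob by simp
    have "emeasure (KT \<nu> x) B = (\<integral>\<^sup>+ a. emeasure (distr PZ borel (\<lambda>z. T x a \<nu> z)) B \<partial>Q x)"
      unfolding KT_def
      by (rule emeasure_bind[OF _ D_sec[OF _ \<nu>] B]) (auto simp: Q_prob Qx.not_empty)
    also have "\<dots> = (\<integral>\<^sup>+ a. emeasure PZ {z \<in> space PZ. T x a \<nu> z \<in> B} \<partial>Q x)"
    proof (rule nn_integral_cong)
      fix a
      show "emeasure (distr PZ borel (\<lambda>z. T x a \<nu> z)) B = emeasure PZ {z \<in> space PZ. T x a \<nu> z \<in> B}"
        by (subst emeasure_distr[OF T_sec[OF \<nu>] B]) (auto intro!: arg_cong[where f="emeasure PZ"])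
    qed
    finally show "emeasure (KT \<nu> x) B = (\<integral>\<^sup>+ a. emeasure PZ {z \<in> space PZ. T x a \<nu> z \<in> B} \<partial>Q x)" .
  qed
  finally show ?thesis .
qed

lemma bind_eq:
  assumes \<nu>: "prob_on S \<nu>" and M: "sets M = sets borel"
    and e: "\<And>B. B \<in> sets borel \<Longrightarrow> emeasure M B =
      (\<integral>\<^sup>+ x. (\<integral>\<^sup>+ a. emeasure PZ {z \<in> space PZ. T x a \<nu> z \<in> B} \<partial>Q x) \<partial>\<nu>)"
  shows "M = \<nu> \<bind> KT \<nu>"
proof (rule measure_eqI)
  note pn = prob_onD[OF \<nu> S_compact]
  have sb: "sets (\<nu> \<bind> KT \<nu>) = sets borel"
    by (rule sets_bind_measurable[OF KT_meas[OF pn(2) \<nu>]]) (simp add: pn)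
  then show "sets M = sets (\<nu> \<bind> KT \<nu>)" using M by simp
  fix B assume "B \<in> sets M"
  then have B: "B \<in> sets borel" using M by simp
  show "emeasure M B = emeasure (\<nu> \<bind> KT \<nu>) B" using e[OF B] KT_emeasure[OF \<nu> B] by simp
qed

lemma T_sec_int:
  fixes f :: "'s \<Rightarrow> real"
  assumes \<nu>: "prob_on S \<nu>" and fm: "f \<in> borel_measurable borel" and fb: "\<And>y. \<bar>f y\<bar> \<le> c"
  shows "\<bar>\<integral>z. f (T x a \<nu> z) \<partial>PZ\<bar> \<le> c" "integrable PZ (\<lambda>z. f (T x a \<nu> z))"
    "(\<lambda>z. f (T x a \<nu> z)) \<in> borel_measurable PZ"
proof -
  show m: "(\<lambda>z. f (T x a \<nu> z)) \<in> borel_measurable PZ"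
    using measurable_compose[OF T_sec[OF \<nu>] fm] by (simp add: comp_def)
  show "\<bar>\<integral>z. f (T x a \<nu> z) \<partial>PZ\<bar> \<le> c" "integrable PZ (\<lambda>z. f (T x a \<nu> z))"
    using abs_int_bound[OF PZ m, of c] fb by auto
qed

lemma H_meas:
  fixes f :: "'s \<Rightarrow> real"
  assumes \<nu>: "prob_on S \<nu>" and fm: "f \<in> borel_measurable borel" and M: "sets M = sets borel"
  shows "(\<lambda>a. \<integral>z. f (T x a \<nu> z) \<partial>PZ) \<in> borel_measurable M"
proof -
  have "(\<lambda>a. integral\<^sup>L (distr PZ borel (\<lambda>z. T x a \<nu> z)) f) \<in> borel_measurable M"
    using measurable_compose[OF D_sec[OF M \<nu>] integral_measurable_subprob_algebra[OF fm]] by simp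
  moreover have "integral\<^sup>L (distr PZ borel (\<lambda>z. T x a \<nu> z)) f = (\<integral>z. f (T x a \<nu> z) \<partial>PZ)" for a
    by (rule integral_distr[OF T_sec[OF \<nu>] fm])
  ultimately show ?thesis by simp
qed

lemma int_KT:
  fixes f :: "'s \<Rightarrow> real"
  assumes \<nu>: "prob_on S \<nu>" and fm: "f \<in> borel_measurable borel" and fb: "\<And>y. \<bar>f y\<bar> \<le> c"
  shows "integral\<^sup>L (KT \<nu> x) f = (\<integral>a. (\<integral>z. f (T x a \<nu> z) \<partial>PZ) \<partial>Q x)"
proof -
  interpret Qx: prob_space "Q x" using Q_prob by simp
  have Ds: "(\<lambda>a. distr PZ borel (\<lambda>z. T x a \<nu> z)) \<in> Q x \<rightarrow>\<^sub>M subprob_algebra borel"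
    by (rule D_sec[OF _ \<nu>]) (simp add: Q_prob)
  have "integral\<^sup>L (KT \<nu> x) f = (\<integral>a. integral\<^sup>L (distr PZ borel (\<lambda>z. T x a \<nu> z)) f \<partial>Q x)"
    unfolding KT_def
  proof (rule integral_bind[OF fm _ Ds Qx.finite_measure_axioms])
    show "\<And>y. y \<in> space borel \<Longrightarrow> \<bar>f y\<bar> \<le> c" using fb by simp
    show "AE a in Q x. emeasure (distr PZ borel (\<lambda>z. T x a \<nu> z)) (space (distr PZ borel (\<lambda>z. T x a \<nu> z))) \<le> ennreal 1"
      using subprob_space.emeasure_space_le_1[OF subprob_space_kernel[OF Ds]] by auto
  qed
  also have "\<dots> = (\<integral>a. (\<integral>z. f (T x a \<nu> z) \<partial>PZ) \<partial>Q x)"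
    by (rule Bochner_Integration.integral_cong[OF refl]) (rule integral_distr[OF T_sec[OF \<nu>] fm])
  finally show ?thesis .
qed

lemma int_bind:
  fixes f :: "'s \<Rightarrow> real"
  assumes \<nu>: "prob_on S \<nu>" and fm: "f \<in> borel_measurable borel" and fb: "\<And>y. \<bar>f y\<bar> \<le> c"
  shows "integral\<^sup>L (\<nu> \<bind> KT \<nu>) f = (\<integral>x. integral\<^sup>L (KT \<nu> x) f \<partial>\<nu>)"
proof -
  note pn = prob_onD[OF \<nu> S_compact]
  interpret prob_space \<nu> by (rule pn(1))
  have K: "KT \<nu> \<in> \<nu> \<rightarrow>\<^sub>M subprob_algebra borel" by (rule KT_meas[OF pn(2) \<nu>])
  show ?thesis
  proof (rule integral_bind[OF fm _ K finite_measure_axioms])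
    show "\<And>y. y \<in> space borel \<Longrightarrow> \<bar>f y\<bar> \<le> c" using fb by simp
    show "AE x in \<nu>. emeasure (KT \<nu> x) (space (KT \<nu> x)) \<le> ennreal 1"
      using subprob_space.emeasure_space_le_1[OF subprob_space_kernel[OF K]] by auto
  qed
qed

lemma G_meas:
  fixes f :: "'s \<Rightarrow> real"
  assumes \<nu>: "prob_on S \<nu>" and fm: "f \<in> borel_measurable borel" and M: "sets M = sets borel"
  shows "(\<lambda>x. integral\<^sup>L (KT \<nu> x) f) \<in> borel_measurable M"
  using measurable_compose[OF KT_meas[OF M \<nu>] integral_measurable_subprob_algebra[OF fm]] by simp

lemma rec_prob_on:
  assumes \<nu>: "prob_on S \<nu>" and M: "sets M = sets borel"
    and e: "\<And>B. B \<in> sets borel \<Longrightarrow> emeasure M B =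
      (\<integral>\<^sup>+ x. (\<integral>\<^sup>+ a. emeasure PZ {z \<in> space PZ. T x a \<nu> z \<in> B} \<partial>Q x) \<partial>\<nu>)"
  shows "prob_on S M"
proof -
  note pn = prob_onD[OF \<nu> S_compact]
  interpret prob_space \<nu> by (rule pn(1))
  have one: "emeasure M B = 1" if B: "B \<in> sets borel" "S \<subseteq> B" for B
  proof -
    have "emeasure M B = (\<integral>\<^sup>+ x. 1 \<partial>\<nu>)"
      unfolding e[OF B(1)]
    proof (rule nn_integral_cong_AE)
      show "AE x in \<nu>. (\<integral>\<^sup>+ a. emeasure PZ {z \<in> space PZ. T x a \<nu> z \<in> B} \<partial>Q x) = 1"
        using pn(4)
      proof eventually_elim
        case (elim x)
        interpret Qx: prob_space "Q x" using Q_prob by simp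
        have "(\<integral>\<^sup>+ a. emeasure PZ {z \<in> space PZ. T x a \<nu> z \<in> B} \<partial>Q x) = (\<integral>\<^sup>+ a. 1 \<partial>Q x)"
        proof (rule nn_integral_cong_AE)
          show "AE a in Q x. emeasure PZ {z \<in> space PZ. T x a \<nu> z \<in> B} = 1"
            using prob_onD(4)[OF Q_probon[OF elim] A_compact]
          proof eventually_elim
            case (elim a)
            have "{z \<in> space PZ. T x a \<nu> z \<in> B} = space PZ"
              using T_range[OF \<nu> \<open>x \<in> S\<close> elim] B(2) by auto
            then show ?case using prob_space.emeasure_space_1[OF PZ] by simp
          qed
        qed
        also have "\<dots> = 1" by (simp add: Qx.emeasure_space_1)
        finally show ?case .
      qed
    qed
    also have "\<dots> = 1" by (simp add: emeasure_space_1)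
    finally show ?thesis .
  qed
  have sp: "space M = UNIV" using sets_eq_imp_space_eq[OF M] by simp
  have "prob_space M" by (rule prob_spaceI) (use one[of UNIV] sp in auto)
  then show ?thesis unfolding prob_on_def using M one[of S] S_compact
    by (auto intro: borel_closed compact_imp_closed)
qed

lemma mus_eq: "\<mu>s = \<mu>s \<bind> KT \<mu>s"
  by (rule bind_eq[OF mus prob_onD(2)[OF mus S_compact] stationary])

lemma bind_prob_on: assumes \<nu>: "prob_on S \<nu>" shows "prob_on S (\<nu> \<bind> KT \<nu>)"
proof (rule rec_prob_on[OF \<nu>])
  note pn = prob_onD[OF \<nu> S_compact]
  show "sets (\<nu> \<bind> KT \<nu>) = sets borel"
    by (rule sets_bind_measurable[OF KT_meas[OF pn(2) \<nu>]]) (simp add: pn)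
  show "\<And>B. B \<in> sets borel \<Longrightarrow> emeasure (\<nu> \<bind> KT \<nu>) B =
      (\<integral>\<^sup>+ x. (\<integral>\<^sup>+ a. emeasure PZ {z \<in> space PZ. T x a \<nu> z \<in> B} \<partial>Q x) \<partial>\<nu>)"
    by (rule KT_emeasure[OF \<nu>])
qed

lemma step:
  assumes \<nu>: "prob_on S \<nu>" and x1: "x1 \<in> S" and x2: "x2 \<in> S" and x12: "x1 \<noteq> x2"
  shows "wdist (\<nu> \<bind> KT \<nu>) \<mu>s \<le> (\<gamma>W + \<gamma>Q * \<gamma>A + \<gamma>S) * wdist \<nu> \<mu>s"
proof -
  define W where "W = wdist \<nu> \<mu>s"
  define L where "L = \<gamma>Q * \<gamma>A + \<gamma>S"
  note pn = prob_onD[OF \<nu> S_compact]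
  note ps = prob_onD[OF mus S_compact]
  have \<nu>': "prob_on S (\<nu> \<bind> KT \<nu>)" by (rule bind_prob_on[OF \<nu>])
  have "0 \<le> wdist (Q x1) (Q x2)" by (rule wdist_nonneg[OF A_compact Q_probon[OF x1] Q_probon[OF x2]])
  also have "\<dots> \<le> \<gamma>Q * dist x1 x2" by (rule T2[OF x1 x2])
  finally have "\<gamma>Q \<ge> 0" using x12 by (simp add: zero_le_mult_iff)
  then have L0: "L > 0" unfolding L_def using T3(1) T4(1) by (simp add: add_nonneg_pos)
  obtain x0 where x0: "x0 \<in> S" using x1 by auto
  obtain c where c: "\<And>y. y \<in> S \<Longrightarrow> dist x0 y \<le> c"
    using compact_imp_bounded[OF S_compact] unfolding bounded_any_center[of S x0] by blast
  show ?thesis unfolding wdist_def[of "\<nu> \<bind> KT \<nu>"] W_def[symmetric]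
  proof (rule cSUP_least)
    show "(lip1 :: ('s \<Rightarrow> real) set) \<noteq> {}" using zero_lip1 by blast
    fix f :: "'s \<Rightarrow> real" assume f: "f \<in> lip1"
    define fc where "fc = (\<lambda>y. max (-c) (min c (f y - f x0)))"
    note cl = clip[OF S_compact x0 c f, folded fc_def]
    have cl3: "\<And>P. prob_on S P \<Longrightarrow> integral\<^sup>L P f = integral\<^sup>L P fc + f x0"
      using clip(3)[OF S_compact x0 c f] unfolding fc_def by blast
    have fcm: "fc \<in> borel_measurable borel" by (rule lip1_borel[OF cl(1)])
    have fcb: "\<And>y. \<bar>fc y\<bar> \<le> c" using cl(2) by (simp add: fc_def)
    have fcl: "\<And>u v. \<bar>fc u - fc v\<bar> \<le> dist u v" using cl(1) unfolding lip1_def by auto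
    define H where "H = (\<lambda>\<nu>'' x a. \<integral>z. fc (T x a \<nu>'' z) \<partial>PZ)"
    define G where "G = (\<lambda>\<nu>'' x. \<integral>a. H \<nu>'' x a \<partial>Q x)"
    have Gk: "integral\<^sup>L (KT \<nu>'' x) fc = G \<nu>'' x" if "prob_on S \<nu>''" for \<nu>'' x
      unfolding G_def H_def by (rule int_KT[OF that fcm fcb])
    have Hb: "\<bar>H \<nu>'' x a\<bar> \<le> c" if "prob_on S \<nu>''" for \<nu>'' x a
      unfolding H_def by (rule T_sec_int(1)[OF that fcm fcb])
    have Hm: "H \<nu>'' x \<in> borel_measurable M" if "prob_on S \<nu>''" "sets M = sets borel" for \<nu>'' x M
      unfolding H_def by (rule H_meas[OF that(1) fcm that(2)])
    have Hi: "integrable (Q y) (H \<nu>'' x)" if "prob_on S \<nu>''" for \<nu>'' x y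
      using abs_int_bound(2)[of "Q y" "H \<nu>'' x" c] Q_prob Hm[OF that] Hb[OF that] by auto
    have Gb: "\<bar>G \<nu>'' x\<bar> \<le> c" if "prob_on S \<nu>''" for \<nu>'' x
      unfolding G_def using abs_int_bound(1)[of "Q x" "H \<nu>'' x" c] Q_prob Hm[OF that] Hb[OF that] by auto
    have Gm: "G \<nu>'' \<in> borel_measurable M" if "prob_on S \<nu>''" "sets M = sets borel" for \<nu>'' M
    proof -
      have "G \<nu>'' = (\<lambda>x. integral\<^sup>L (KT \<nu>'' x) fc)" using Gk[OF that(1)] by auto
      then show ?thesis using G_meas[OF that(1) fcm that(2)] by simp
    qed
    have Gi: "integrable P (G \<nu>'')" if "prob_on S \<nu>''" "prob_on S P" for \<nu>'' P
      using abs_int_bound(2)[of P "G \<nu>''" c] prob_onD[OF that(2) S_compact] Gm[OF that(1)] Gb[OF that(1)]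
      by auto
    have Tsi: "integrable PZ (\<lambda>z. fc (T x a \<nu>'' z))" if "prob_on S \<nu>''" for \<nu>'' x a
      by (rule T_sec_int(2)[OF that fcm fcb])
    have Tsm: "(\<lambda>z. fc (T x a \<nu>'' z)) \<in> borel_measurable PZ" if "prob_on S \<nu>''" for \<nu>'' x a
      by (rule T_sec_int(3)[OF that fcm fcb])
    have G1: "\<bar>G \<nu> x - G \<mu>s x\<bar> \<le> \<gamma>W * W" if x: "x \<in> S" for x
    proof -
      interpret Qx: prob_space "Q x" using Q_prob by simp
      have "G \<nu> x - G \<mu>s x = (\<integral>a. H \<nu> x a - H \<mu>s x a \<partial>Q x)"
        unfolding G_def using Hi[OF \<nu>] Hi[OF mus] by (simp add: Bochner_Integration.integral_diff)
      moreover have "\<bar>\<integral>a. H \<nu> x a - H \<mu>s x a \<partial>Q x\<bar> \<le> \<gamma>W * W"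
      proof (rule abs_int_bound(1)[OF Qx.prob_space_axioms])
        show "(\<lambda>a. H \<nu> x a - H \<mu>s x a) \<in> borel_measurable (Q x)"
          using Hm[OF \<nu>] Hm[OF mus] Q_prob by (intro borel_measurable_diff) auto
        show "AE a in Q x. \<bar>H \<nu> x a - H \<mu>s x a\<bar> \<le> \<gamma>W * W"
          using prob_onD(4)[OF Q_probon[OF x] A_compact]
        proof eventually_elim
          case (elim a)
          have "H \<nu> x a - H \<mu>s x a = (\<integral>z. fc (T x a \<nu> z) - fc (T x a \<mu>s z) \<partial>PZ)"
            unfolding H_def using Tsi[OF \<nu>] Tsi[OF mus] by (simp add: Bochner_Integration.integral_diff)
          moreover have "\<bar>\<integral>z. fc (T x a \<nu> z) - fc (T x a \<mu>s z) \<partial>PZ\<bar> \<le> \<gamma>W * W"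
          proof (rule abs_int_bound(1)[OF PZ])
            show "(\<lambda>z. fc (T x a \<nu> z) - fc (T x a \<mu>s z)) \<in> borel_measurable PZ"
              using Tsm[OF \<nu>] Tsm[OF mus] by (intro borel_measurable_diff) auto
            show "AE z in PZ. \<bar>fc (T x a \<nu> z) - fc (T x a \<mu>s z)\<bar> \<le> \<gamma>W * W"
            proof (rule AE_I2)
              fix z assume z: "z \<in> space PZ"
              show "\<bar>fc (T x a \<nu> z) - fc (T x a \<mu>s z)\<bar> \<le> \<gamma>W * W"
                using fcl[of "T x a \<nu> z" "T x a \<mu>s z"] T1(2)[OF \<nu> x elim z] unfolding W_def
                by linarith
            qed
          qed
          ultimately show ?case by simp
        qed
      qed
      ultimately show ?thesis by simp
    qed
    have G2: "\<bar>G \<mu>s x - G \<mu>s x'\<bar> \<le> L * dist x x'" if x: "x \<in> S" and x': "x' \<in> S" for x x'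
    proof -
      interpret Qx': prob_space "Q x'" using Q_prob by simp
      have hl: "\<bar>H \<mu>s x a - H \<mu>s x a'\<bar> \<le> \<gamma>A * dist a a'" if a: "a \<in> A" and a': "a' \<in> A" for a a'
      proof -
        have "H \<mu>s x a - H \<mu>s x a' = (\<integral>z. fc (T x a \<mu>s z) - fc (T x a' \<mu>s z) \<partial>PZ)"
          unfolding H_def using Tsi[OF mus] by (simp add: Bochner_Integration.integral_diff)
        moreover have "\<bar>\<integral>z. fc (T x a \<mu>s z) - fc (T x a' \<mu>s z) \<partial>PZ\<bar> \<le> \<gamma>A * dist a a'"
        proof (rule abs_int_bound(1)[OF PZ])
          show "(\<lambda>z. fc (T x a \<mu>s z) - fc (T x a' \<mu>s z)) \<in> borel_measurable PZ"
            using Tsm[OF mus] by (intro borel_measurable_diff) auto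
          show "AE z in PZ. \<bar>fc (T x a \<mu>s z) - fc (T x a' \<mu>s z)\<bar> \<le> \<gamma>A * dist a a'"
          proof (rule AE_I2)
            fix z assume z: "z \<in> space PZ"
            show "\<bar>fc (T x a \<mu>s z) - fc (T x a' \<mu>s z)\<bar> \<le> \<gamma>A * dist a a'"
              using fcl[of "T x a \<mu>s z" "T x a' \<mu>s z"] T3(2)[OF x a a' z] by linarith
          qed
        qed
        ultimately show ?thesis by simp
      qed
      have a: "\<bar>(\<integral>a. H \<mu>s x a \<partial>Q x) - (\<integral>a. H \<mu>s x a \<partial>Q x')\<bar> \<le> \<gamma>A * wdist (Q x') (Q x)"
        by (rule lipS_bound[OF A_compact Q_probon[OF x'] Q_probon[OF x] T3(1) Hm[OF mus] hl]) auto
      have b: "\<gamma>A * wdist (Q x') (Q x) \<le> \<gamma>A * (\<gamma>Q * dist x x')"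
        using T2[OF x' x] T3(1) by (simp add: dist_commute)
      have c': "\<bar>(\<integral>a. H \<mu>s x a \<partial>Q x') - (\<integral>a. H \<mu>s x' a \<partial>Q x')\<bar> \<le> \<gamma>S * dist x x'"
      proof -
        have "(\<integral>a. H \<mu>s x a \<partial>Q x') - (\<integral>a. H \<mu>s x' a \<partial>Q x') = (\<integral>a. H \<mu>s x a - H \<mu>s x' a \<partial>Q x')"
          using Hi[OF mus] by (simp add: Bochner_Integration.integral_diff)
        moreover have "\<bar>\<integral>a. H \<mu>s x a - H \<mu>s x' a \<partial>Q x'\<bar> \<le> \<gamma>S * dist x x'"
        proof (rule abs_int_bound(1)[OF Qx'.prob_space_axioms])
          show "(\<lambda>a. H \<mu>s x a - H \<mu>s x' a) \<in> borel_measurable (Q x')"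
            using Hm[OF mus] Q_prob by (intro borel_measurable_diff) auto
          show "AE a in Q x'. \<bar>H \<mu>s x a - H \<mu>s x' a\<bar> \<le> \<gamma>S * dist x x'"
            using prob_onD(4)[OF Q_probon[OF x'] A_compact]
          proof eventually_elim
            case (elim a)
            have "H \<mu>s x a - H \<mu>s x' a = (\<integral>z. fc (T x a \<mu>s z) - fc (T x' a \<mu>s z) \<partial>PZ)"
              unfolding H_def using Tsi[OF mus] by (simp add: Bochner_Integration.integral_diff)
            moreover have "\<bar>\<integral>z. fc (T x a \<mu>s z) - fc (T x' a \<mu>s z) \<partial>PZ\<bar> \<le> \<gamma>S * dist x x'"
            proof (rule abs_int_bound(1)[OF PZ])
              show "(\<lambda>z. fc (T x a \<mu>s z) - fc (T x' a \<mu>s z)) \<in> borel_measurable PZ"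
                using Tsm[OF mus] by (intro borel_measurable_diff) auto
              show "AE z in PZ. \<bar>fc (T x a \<mu>s z) - fc (T x' a \<mu>s z)\<bar> \<le> \<gamma>S * dist x x'"
              proof (rule AE_I2)
                fix z assume z: "z \<in> space PZ"
                show "\<bar>fc (T x a \<mu>s z) - fc (T x' a \<mu>s z)\<bar> \<le> \<gamma>S * dist x x'"
                  using fcl[of "T x a \<mu>s z" "T x' a \<mu>s z"] T4(2)[OF x x' elim z] by linarith
              qed
            qed
            ultimately show ?case by simp
          qed
        qed
        ultimately show ?thesis by simp
      qed
      have "\<bar>G \<mu>s x - G \<mu>s x'\<bar> \<le> \<gamma>A * (\<gamma>Q * dist x x') + \<gamma>S * dist x x'"
        unfolding G_def using a b c' by linarith
      then show ?thesis unfolding L_def by (simp add: algebra_simps)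
    qed
    have I1: "integral\<^sup>L (\<nu> \<bind> KT \<nu>) fc = (\<integral>x. G \<nu> x \<partial>\<nu>)"
      using int_bind[OF \<nu> fcm fcb] Gk[OF \<nu>] by simp
    have I2: "integral\<^sup>L \<mu>s fc = (\<integral>x. G \<mu>s x \<partial>\<mu>s)"
      using int_bind[OF mus fcm fcb] Gk[OF mus] mus_eq by simp
    have e1: "\<bar>(\<integral>x. G \<mu>s x \<partial>\<mu>s) - (\<integral>x. G \<mu>s x \<partial>\<nu>)\<bar> \<le> L * W"
      unfolding W_def by (rule lipS_bound[OF S_compact \<nu> mus L0 Gm[OF mus] G2]) auto
    have e2: "\<bar>(\<integral>x. G \<mu>s x \<partial>\<nu>) - (\<integral>x. G \<nu> x \<partial>\<nu>)\<bar> \<le> \<gamma>W * W"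
    proof -
      have "(\<integral>x. G \<mu>s x \<partial>\<nu>) - (\<integral>x. G \<nu> x \<partial>\<nu>) = (\<integral>x. G \<mu>s x - G \<nu> x \<partial>\<nu>)"
        using Gi[OF mus \<nu>] Gi[OF \<nu> \<nu>] by (simp add: Bochner_Integration.integral_diff)
      moreover have "\<bar>\<integral>x. G \<mu>s x - G \<nu> x \<partial>\<nu>\<bar> \<le> \<gamma>W * W"
      proof (rule abs_int_bound(1)[OF pn(1)])
        show "(\<lambda>x. G \<mu>s x - G \<nu> x) \<in> borel_measurable \<nu>"
          using Gm[OF mus pn(2)] Gm[OF \<nu> pn(2)] by (intro borel_measurable_diff) auto
        show "AE x in \<nu>. \<bar>G \<mu>s x - G \<nu> x\<bar> \<le> \<gamma>W * W"
          using pn(4) by eventually_elim (use G1 in \<open>auto simp: abs_minus_commute\<close>)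
      qed
      ultimately show ?thesis by simp
    qed
    have "\<bar>(\<integral>x. f x \<partial>\<mu>s) - (\<integral>x. f x \<partial>(\<nu> \<bind> KT \<nu>))\<bar> = \<bar>integral\<^sup>L \<mu>s fc - integral\<^sup>L (\<nu> \<bind> KT \<nu>) fc\<bar>"
      using cl3[OF mus] cl3[OF \<nu>'] by simp
    also have "\<dots> \<le> L * W + \<gamma>W * W" unfolding I1 I2 using e1 e2 by linarith
    also have "\<dots> = (\<gamma>W + \<gamma>Q * \<gamma>A + \<gamma>S) * W" unfolding L_def by (simp add: algebra_simps)
    finally show "\<bar>(\<integral>x. f x \<partial>\<mu>s) - (\<integral>x. f x \<partial>(\<nu> \<bind> KT \<nu>))\<bar> \<le> (\<gamma>W + \<gamma>Q * \<gamma>A + \<gamma>S) * W" .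
  qed
qed

end
theorem mainTheorem12:
  fixes S :: "'s::euclidean_space set"
    and A :: "'a::euclidean_space set"
    and PZ :: "'z measure"
    and T :: "'s \<Rightarrow> 'a \<Rightarrow> 's measure \<Rightarrow> 'z \<Rightarrow> 's"
    and Q :: "'s \<Rightarrow> 'a measure"
    and \<mu>s :: "'s measure"
    and \<mu> :: "nat \<Rightarrow> 's measure"
    and \<gamma>W \<gamma>Q \<gamma>A \<gamma>S :: real
  assumes S_compact: "compact S"
    and A_compact: "compact A"
    and PZ: "prob_space PZ"
    and T_meas: "\<And>\<nu>. prob_on S \<nu> \<Longrightarrow>
        (\<lambda>(x, a, z). T x a \<nu> z) \<in> borel_measurable (borel \<Otimes>\<^sub>M (borel \<Otimes>\<^sub>M PZ))"
    and T_range: "\<And>\<nu> x a z. prob_on S \<nu> \<Longrightarrow> x \<in> S \<Longrightarrow> a \<in> A \<Longrightarrow> z \<in> space PZ \<Longrightarrow>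
        T x a \<nu> z \<in> S"
    and Q_prob: "\<And>x. prob_space (Q x) \<and> sets (Q x) = sets borel"
    and Q_A: "\<And>x. x \<in> S \<Longrightarrow> emeasure (Q x) A = 1"
    and Q_meas: "\<And>B. B \<in> sets borel \<Longrightarrow> (\<lambda>x. emeasure (Q x) B) \<in> borel_measurable borel"
    and mus: "prob_on S \<mu>s"
    and stationary: "\<And>B. B \<in> sets borel \<Longrightarrow>
        emeasure \<mu>s B = (\<integral>\<^sup>+ x. (\<integral>\<^sup>+ a. emeasure PZ {z \<in> space PZ. T x a \<mu>s z \<in> B} \<partial>Q x) \<partial>\<mu>s)"
    and T1: "\<gamma>W > 0" "\<And>\<nu> x a z. prob_on S \<nu> \<Longrightarrow> x \<in> S \<Longrightarrow> a \<in> A \<Longrightarrow> z \<in> space PZ \<Longrightarrow>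
        dist (T x a \<nu> z) (T x a \<mu>s z) \<le> \<gamma>W * wdist \<nu> \<mu>s"
    and T2: "\<And>x x'. x \<in> S \<Longrightarrow> x' \<in> S \<Longrightarrow> wdist (Q x) (Q x') \<le> \<gamma>Q * dist x x'"
    and T3: "\<gamma>A > 0" "\<And>x a a' z. x \<in> S \<Longrightarrow> a \<in> A \<Longrightarrow> a' \<in> A \<Longrightarrow> z \<in> space PZ \<Longrightarrow>
        dist (T x a \<mu>s z) (T x a' \<mu>s z) \<le> \<gamma>A * dist a a'"
    and T4: "\<gamma>S > 0" "\<And>x x' a z. x \<in> S \<Longrightarrow> x' \<in> S \<Longrightarrow> a \<in> A \<Longrightarrow> z \<in> space PZ \<Longrightarrow>
        dist (T x a \<mu>s z) (T x' a \<mu>s z) \<le> \<gamma>S * dist x x'"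
    and T5: "\<gamma>W + \<gamma>Q * \<gamma>A + \<gamma>S < 1"
    and mu0: "prob_on S (\<mu> 0)"
    and mu_sets: "\<And>k. sets (\<mu> (Suc k)) = sets borel"
    and mu_rec: "\<And>k B. B \<in> sets borel \<Longrightarrow>
        emeasure (\<mu> (Suc k)) B =
          (\<integral>\<^sup>+ x. (\<integral>\<^sup>+ a. emeasure PZ {z \<in> space PZ. T x a (\<mu> k) z \<in> B} \<partial>Q x) \<partial>\<mu> k)"
  shows "(\<forall>k. wdist (\<mu> (Suc k)) \<mu>s \<le> (\<gamma>W + \<gamma>Q * \<gamma>A + \<gamma>S) * wdist (\<mu> k) \<mu>s)
         \<and> weak_conv_to \<mu> \<mu>s"
  proof -
  interpret st: setting S A PZ T Q \<mu>s \<gamma>W \<gamma>Q \<gamma>A \<gamma>S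
    by (intro setting.intro) (fact assms)+
  have P: "prob_on S (\<mu> k)" for k
  proof (induction k)
    case 0 show ?case by (rule mu0)
  next
    case (Suc k)
    have "\<mu> (Suc k) = \<mu> k \<bind> st.KT (\<mu> k)"
      by (rule st.bind_eq[OF Suc mu_sets mu_rec])
    then show ?case using st.bind_prob_on[OF Suc] by simp
  qed
  define \<gamma> where "\<gamma> = \<gamma>W + \<gamma>Q * \<gamma>A + \<gamma>S"
  define W where "W k = wdist (\<mu> k) \<mu>s" for k
  have W0: "W k \<ge> 0" for k unfolding W_def by (rule wdist_nonneg[OF S_compact P mus])
  have stepk: "W (Suc k) \<le> \<gamma> * W k" for k
  proof (cases "\<exists>x1\<in>S. \<exists>x2\<in>S. x1 \<noteq> x2")
    case True
    then obtain x1 x2 where x: "x1 \<in> S" "x2 \<in> S" "x1 \<noteq> x2" by blast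
    have "\<mu> (Suc k) = \<mu> k \<bind> st.KT (\<mu> k)"
      by (rule st.bind_eq[OF P mu_sets mu_rec])
    then show ?thesis unfolding W_def \<gamma>_def using st.step[OF P x] by simp
  next
    case False
    obtain x0 where x0: "x0 \<in> S" using prob_onD(5)[OF mus S_compact] by auto
    with False have sub: "S \<subseteq> {x0}" by blast
    show ?thesis unfolding W_def
      using wdist_single[OF S_compact P mus sub, of "Suc k"] wdist_single[OF S_compact P mus sub, of k]
      by simp
  qed
  define \<gamma>' where "\<gamma>' = max \<gamma> 0"
  have g1: "\<gamma>' < 1" "\<gamma>' \<ge> 0" using T5 unfolding \<gamma>'_def \<gamma>_def by auto
  have Wb: "W k \<le> \<gamma>' ^ k * W 0" for k
  proof (induction k)
    case 0 show ?case by simp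
  next
    case (Suc k)
    have "W (Suc k) \<le> \<gamma> * W k" by (rule stepk)
    also have "\<dots> \<le> \<gamma>' * W k" unfolding \<gamma>'_def using W0[of k] by (intro mult_right_mono) auto
    also have "\<dots> \<le> \<gamma>' * (\<gamma>' ^ k * W 0)" using Suc g1 by (intro mult_left_mono) auto
    finally show ?case by simp
  qed
  have "(\<lambda>k. \<gamma>' ^ k * W 0) \<longlonglongrightarrow> 0"
    by (rule tendsto_mult_left_zero) (rule LIMSEQ_power_zero, use g1 in simp)
  then have "W \<longlonglongrightarrow> 0"
    by (rule Lim_null_comparison[rotated]) (use Wb W0 in auto)
  then have "weak_conv_to \<mu> \<mu>s"
    by (intro weak_from_W[OF S_compact P mus]) (simp add: W_def[abs_def])
  moreover have "\<forall>k. wdist (\<mu> (Suc k)) \<mu>s \<le> (\<gamma>W + \<gamma>Q * \<gamma>A + \<gamma>S) * wdist (\<mu> k) \<mu>s"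
    using stepk unfolding W_def \<gamma>_def by blast
  ultimately show ?thesis by blast
qed

end
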